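(* Let $\mathbf{T}$ be a totally ordered set and $\Bbbk$ a field. The assignment $F\mapsto\mathcal{B}_F$, sending a homomorphism $F$ of pointwise finite-dimensional $\mathbf{T}$-persistence modules to the barcode of its image, defines a functor from the category of factorizations $\mathrm{Fact}(\mathbf{vec}^{\mathbf{T}})$ to the poset $\mathbf{SBar}_{\mathbf{T}}$. Equivalently: whenever $F:\mathbb{U}\to\mathbb{V}$ and $G:\mathbb{T}'\to\mathbb{W}$ are homomorphisms of pointwise finite-dimensional $\mathbf{T}$-persistence modules and there exist homomorphisms $\varphi_1:\mathbb{T}'\to\mathbb{U}$ and $\varphi_2:\mathbb{V}\to\mathbb{W}$ with $G=\varphi_2\circ F\circ\varphi_1$, we have $\mathcal{B}_G\sqsubseteq\mathcal{B}_F$.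
   Context: A $\mathbf{T}$-persistence module over a field $\Bbbk$ is a functor $\mathbb{V}:\mathbf{T}\to\mathbf{Vec}_\Bbbk$; homomorphisms are natural transformations; it is pointwise finite-dimensional (p.f.d.) if each $\mathbb{V}(t)$ is finite-dimensional; $\mathbf{vec}^{\mathbf{T}}$ denotes the category of p.f.d. $\mathbf{T}$-modules. An interval in $\mathbf{T}$ is a nonempty convex subset; $\mathcal{I}_{\mathbf{T}}$ is the set of intervals. A $\mathbf{T}$-indexed barcode is a function $\mathcal{B}:\mathrm{Rep}(\mathcal{B})\to\mathcal{I}_{\mathbf{T}}$ from a set of bars. Every p.f.d. $\mathbf{T}$-module $\mathbb{V}$ is isomorphic to $\bigoplus_{\beta\in\mathrm{Rep}(\mathcal{B}_\mathbb{V})}\Bbbk_{\mathcal{B}_\mathbb{V}(\beta)}$ for a barcode $\mathcal{B}_\mathbb{V}$, unique up to bijection of bars, where $\Bbbk_I$ is the interval module ($\Bbbk$ on $I$, $0$ elsewhere, identity maps within $I$). For a homomorphism $F$, $\mathcal{B}_F:=\mathcal{B}_{\mathrm{im}\,F}$. A matching $M\subseteq\mathrm{Rep}(\mathcal{A})\times\mathrm{Rep}(\mathcal{B})$ relates each element to at most one other element; it is injective if every $\alpha\in\mathrm{Rep}(\mathcal{A})$ is matched. It is a sub-barcode matching if $\mathcal{A}(\alpha)\subseteq\mathcal{B}(\beta)$ for all $(\alpha,\beta)\in M$. We write $\mathcal{A}\sqsubseteq\mathcal{B}$ ($\mathcal{A}$ is a sub-barcode of $\mathcal{B}$) if there is an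 injective sub-barcode matching from $\mathcal{A}$ to $\mathcal{B}$. $\mathbf{SBar}_{\mathbf{T}}$ is the poset of isomorphism classes of $\mathbf{T}$-indexed barcodes ordered by $\sqsubseteq$. The category of factorizations $\mathrm{Fact}(\mathbf{C})$ has as objects the morphisms of $\mathbf{C}$, and an arrow $G\rightleftharpoons F$ from $G:a\to d$ to $F:b\to c$ is a pair $(\varphi_1:a\to b,\varphi_2:c\to d)$ with $G=\varphi_2\circ F\circ\varphi_1$. *)

theory Defs
  imports Complex_Main "HOL-Library.Function_Algebras"
begin

text \<open>A module is represented by an
  ambient k-vector space (type 'v with scalar multiplication sc), a family of
  subspaces Sp t of it, and structure maps Mp s t (for s \<le> t).\<close>

definition is_interval :: "'t::linorder set \<Rightarrow> bool" where
  "is_interval I \<longleftrightarrow> I \<noteq> {} \<and> (\<forall>x\<in>I. \<forall>z\<in>I. \<forall>y. x \<le> y \<and> y \<le> z \<longrightarrow> y \<in> I)"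

definition lin_on :: "('k::field \<Rightarrow> 'v::ab_group_add \<Rightarrow> 'v) \<Rightarrow> ('k \<Rightarrow> 'w::ab_group_add \<Rightarrow> 'w)
    \<Rightarrow> 'v set \<Rightarrow> ('v \<Rightarrow> 'w) \<Rightarrow> bool" where
  "lin_on s1 s2 S f \<longleftrightarrow>
     (\<forall>x\<in>S. \<forall>y\<in>S. f (x + y) = f x + f y) \<and> (\<forall>c. \<forall>x\<in>S. f (s1 c x) = s2 c (f x))"

definition pmod :: "('k::field \<Rightarrow> 'v::ab_group_add \<Rightarrow> 'v) \<Rightarrow> ('t::linorder \<Rightarrow> 'v set)
    \<Rightarrow> ('t \<Rightarrow> 't \<Rightarrow> 'v \<Rightarrow> 'v) \<Rightarrow> bool" where
  "pmod sc Sp Mp \<longleftrightarrow>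
     vector_space sc \<and>
     (\<forall>t. module.subspace sc (Sp t)) \<and>
     (\<forall>s t. s \<le> t \<longrightarrow> lin_on sc sc (Sp s) (Mp s t) \<and> Mp s t ` Sp s \<subseteq> Sp t) \<and>
     (\<forall>t. \<forall>x\<in>Sp t. Mp t t x = x) \<and>
     (\<forall>r s t. r \<le> s \<longrightarrow> s \<le> t \<longrightarrow> (\<forall>x\<in>Sp r. Mp r t x = Mp s t (Mp r s x)))"

definition pfd :: "('k::field \<Rightarrow> 'v::ab_group_add \<Rightarrow> 'v) \<Rightarrow> ('t::linorder \<Rightarrow> 'v set) \<Rightarrow> bool" where
  "pfd sc Sp \<longleftrightarrow> (\<forall>t. \<exists>B. finite B \<and> B \<subseteq> Sp t \<and> module.span sc B = Sp t)"

definition phom :: "('k::field \<Rightarrow> 'v::ab_group_add \<Rightarrow> 'v) \<Rightarrow> ('t::linorder \<Rightarrow> 'v set) \<Rightarrow> ('t \<Rightarrow> 't \<Rightarrow> 'v \<Rightarrow> 'v)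
    \<Rightarrow> ('k \<Rightarrow> 'w::ab_group_add \<Rightarrow> 'w) \<Rightarrow> ('t \<Rightarrow> 'w set) \<Rightarrow> ('t \<Rightarrow> 't \<Rightarrow> 'w \<Rightarrow> 'w)
    \<Rightarrow> ('t \<Rightarrow> 'v \<Rightarrow> 'w) \<Rightarrow> bool" where
  "phom sc1 Sp1 Mp1 sc2 Sp2 Mp2 F \<longleftrightarrow>
     (\<forall>t. lin_on sc1 sc2 (Sp1 t) (F t) \<and> F t ` Sp1 t \<subseteq> Sp2 t) \<and>
     (\<forall>s t. s \<le> t \<longrightarrow> (\<forall>x\<in>Sp1 s. F t (Mp1 s t x) = Mp2 s t (F s x)))"

definition piso :: "('k::field \<Rightarrow> 'v::ab_group_add \<Rightarrow> 'v) \<Rightarrow> ('t::linorder \<Rightarrow> 'v set) \<Rightarrow> ('t \<Rightarrow> 't \<Rightarrow> 'v \<Rightarrow> 'v)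
    \<Rightarrow> ('k \<Rightarrow> 'w::ab_group_add \<Rightarrow> 'w) \<Rightarrow> ('t \<Rightarrow> 'w set) \<Rightarrow> ('t \<Rightarrow> 't \<Rightarrow> 'w \<Rightarrow> 'w)
    \<Rightarrow> ('t \<Rightarrow> 'v \<Rightarrow> 'w) \<Rightarrow> bool" where
  "piso sc1 Sp1 Mp1 sc2 Sp2 Mp2 F \<longleftrightarrow>
     phom sc1 Sp1 Mp1 sc2 Sp2 Mp2 F \<and> (\<forall>t. bij_betw (F t) (Sp1 t) (Sp2 t))"

text \<open>Image submodule of a homomorphism F : (Sp1,Mp1) \<rightarrow> (Sp2,Mp2):
  spaces F t ` Sp1 t with the structure maps of the codomain.\<close>
definition im_space :: "('t \<Rightarrow> 'v set) \<Rightarrow> ('t \<Rightarrow> 'v \<Rightarrow> 'w) \<Rightarrow> 't \<Rightarrow> 'w set" where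
  "im_space Sp1 F t = F t ` Sp1 t"

definition is_barcode :: "'b set \<Rightarrow> ('b \<Rightarrow> 't::linorder set) \<Rightarrow> bool" where
  "is_barcode R B \<longleftrightarrow> (\<forall>\<beta>\<in>R. is_interval (B \<beta>))"

text \<open>Direct sum of interval modules k_{B \<beta>}, \<beta> \<in> R, realised inside the
  finitely supported functions 'b \<Rightarrow> 'k.\<close>
definition fun_scale :: "'k::field \<Rightarrow> ('b \<Rightarrow> 'k) \<Rightarrow> ('b \<Rightarrow> 'k)" where
  "fun_scale c v = (\<lambda>\<beta>. c * v \<beta>)"

definition bsum_space :: "'b set \<Rightarrow> ('b \<Rightarrow> 't set) \<Rightarrow> 't \<Rightarrow> ('b \<Rightarrow> 'k::field) set" where
  "bsum_space R B t = {v. finite {\<beta>. v \<beta> \<noteq> 0} \<and> (\<forall>\<beta>. v \<beta> \<noteq> 0 \<longrightarrow> \<beta> \<in> R \<and> t \<in> B \<beta>)}"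

definition bsum_map :: "('b \<Rightarrow> 't set) \<Rightarrow> 't \<Rightarrow> 't \<Rightarrow> ('b \<Rightarrow> 'k::field) \<Rightarrow> ('b \<Rightarrow> 'k)" where
  "bsum_map B s t v = (\<lambda>\<beta>. if t \<in> B \<beta> then v \<beta> else 0)"

definition barcode_of :: "('k::field \<Rightarrow> 'v::ab_group_add \<Rightarrow> 'v) \<Rightarrow> ('t::linorder \<Rightarrow> 'v set)
    \<Rightarrow> ('t \<Rightarrow> 't \<Rightarrow> 'v \<Rightarrow> 'v) \<Rightarrow> 'b set \<Rightarrow> ('b \<Rightarrow> 't set) \<Rightarrow> bool" where
  "barcode_of sc Sp Mp R B \<longleftrightarrow> is_barcode R B \<and>
     (\<exists>\<Phi>. piso sc Sp Mp fun_scale (bsum_space R B) (bsum_map B) \<Phi>)"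

definition is_matching :: "('a \<times> 'b) set \<Rightarrow> 'a set \<Rightarrow> 'b set \<Rightarrow> bool" where
  "is_matching M RA RB \<longleftrightarrow> M \<subseteq> RA \<times> RB \<and>
     (\<forall>a b b'. (a, b) \<in> M \<longrightarrow> (a, b') \<in> M \<longrightarrow> b = b') \<and>
     (\<forall>a a' b. (a, b) \<in> M \<longrightarrow> (a', b) \<in> M \<longrightarrow> a = a')"

definition sub_barcode :: "'a set \<Rightarrow> ('a \<Rightarrow> 't set) \<Rightarrow> 'b set \<Rightarrow> ('b \<Rightarrow> 't set) \<Rightarrow> bool" where
  "sub_barcode RA A RB B \<longleftrightarrow>
     (\<exists>M. is_matching M RA RB \<and> (\<forall>\<alpha>\<in>RA. \<exists>\<beta>. (\<alpha>, \<beta>) \<in> M) \<and>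
          (\<forall>(\<alpha>, \<beta>)\<in>M. A \<alpha> \<subseteq> B \<beta>))"

end

theory Submission
  imports Defs "HOL-Library.Product_Lexorder"
begin

context vector_space
begin

lemma span_disjoint_zero:
  assumes ind: "independent (K \<union> C)" and fin: "finite (K \<union> C)" and disj: "K \<inter> C = {}"
    and xK: "x \<in> span K" and xC: "x \<in> span C"
  shows "x = 0"
proof -
  have fK: "finite K" and fC: "finite C" using fin by auto
  obtain u where u: "x = (\<Sum>v\<in>K. u v *s v)" using xK span_finite[OF fK] by auto
  obtain w where w: "x = (\<Sum>v\<in>C. w v *s v)" using xC span_finite[OF fC] by auto
  define c where "c v = (if v \<in> K then u v else - w v)" for v
  have "(\<Sum>v\<in>K \<union> C. c v *s v) = (\<Sum>v\<in>K. c v *s v) + (\<Sum>v\<in>C. c v *s v)"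
    using fK fC disj by (simp add: sum.union_disjoint)
  also have "(\<Sum>v\<in>K. c v *s v) = x" unfolding u c_def by (rule sum.cong) auto
  also have "(\<Sum>v\<in>C. c v *s v) = (\<Sum>v\<in>C. - (w v *s v))"
    unfolding c_def using disj by (intro sum.cong) auto
  also have "\<dots> = - x" unfolding w by (simp add: sum_negf)
  finally have "(\<Sum>v\<in>K \<union> C. c v *s v) = 0" by simp
  then have "\<forall>v\<in>K \<union> C. c v = 0" using ind fin dependent_finite by blast
  then have "\<forall>v\<in>K. c v = 0" by blast
  then have "\<forall>v\<in>K. u v = 0" by (simp add: c_def)
  then show ?thesis unfolding u by simp
qed

lemma dim_zero_space: "dim {0} = 0"
  using dim_span[of "{}"] dim_eq_card_independent[OF independent_empty] by simp

lemma dim_mono_fd: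
  assumes "B \<subseteq> A" "A \<subseteq> span F" "finite F"
  shows "dim B \<le> dim A"
proof -
  obtain Ba where Ba: "Ba \<subseteq> A" "independent Ba" "A \<subseteq> span Ba" "card Ba = dim A"
    using basis_exists by blast
  have "finite Ba" using independent_span_bound[OF assms(3) Ba(2)] Ba(1) assms(2) by auto
  then have "dim B \<le> card Ba" using dim_le_card[of B Ba] assms(1) Ba(3) by auto
  then show ?thesis using Ba(4) by simp
qed

lemma fd_finite_basis:
  assumes "A \<subseteq> span F" "finite F"
  obtains Ba where "Ba \<subseteq> A" "independent Ba" "A \<subseteq> span Ba" "card Ba = dim A" "finite Ba"
proof -
  obtain Ba where Ba: "Ba \<subseteq> A" "independent Ba" "A \<subseteq> span Ba" "card Ba = dim A"
    using basis_exists by blast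
  have "finite Ba" using independent_span_bound[OF assms(2) Ba(2)] Ba(1) assms(1) by auto
  then show ?thesis using Ba that by blast
qed

end

context vector_space_pair
begin

lemma lin_on_zero:
  assumes "vs1.subspace A" "lin_on s1 s2 A f"
  shows "f 0 = 0"
proof -
  have "0 \<in> A" using assms(1) vs1.subspace_0 by blast
  then have "f (0 + 0) = f 0 + f 0" using assms(2) unfolding lin_on_def by blast
  then show ?thesis by simp
qed

lemma lin_extend:
  assumes A: "vs1.subspace A" and f: "lin_on s1 s2 A f"
  shows "\<exists>g. Vector_Spaces.linear s1 s2 g \<and> (\<forall>x\<in>A. g x = f x)"
proof -
  obtain Bs where Bs: "Bs \<subseteq> A" "vs1.independent Bs" "A \<subseteq> vs1.span Bs"
    using vs1.maximal_independent_subset[of A] by blast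
  define g where "g = construct Bs f"
  have lg: "Vector_Spaces.linear s1 s2 g" unfolding g_def using linear_construct[OF Bs(2)] .
  interpret lg: Vector_Spaces.linear s1 s2 g by (rule lg)
  have gb: "g b = f b" if "b \<in> Bs" for b unfolding g_def using construct_basis[OF Bs(2) that] .
  have "x \<in> A \<and> g x = f x" if "x \<in> vs1.span Bs" for x
    using that
  proof (induction rule: vs1.span_induct)
    case (step x) then show ?case using gb Bs(1) by auto
  next
    case base
    show ?case
    proof (rule vs1.subspaceI)
      show "0 \<in> {x. x \<in> A \<and> g x = f x}" using lin_on_zero[OF A f] lg.zero A vs1.subspace_0 by simp
    next
      fix x y assume "x \<in> {x. x \<in> A \<and> g x = f x}" "y \<in> {x. x \<in> A \<and> g x = f x}"
      then show "x + y \<in> {x. x \<in> A \<and> g x = f x}"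
        using A f unfolding lin_on_def by (simp add: vs1.subspace_add lg.add)
    next
      fix c x assume "x \<in> {x. x \<in> A \<and> g x = f x}"
      then show "c *a x \<in> {x. x \<in> A \<and> g x = f x}"
        using A f unfolding lin_on_def by (simp add: vs1.subspace_scale lg.scale)
    qed
  qed
  then show ?thesis using lg Bs(3) by blast
qed

lemma rank_nullity_lin:
  assumes A: "vs1.subspace A" and F: "finite F" "A \<subseteq> vs1.span F" and lg: "Vector_Spaces.linear s1 s2 g"
  shows "vs1.dim A = vs2.dim (g ` A) + vs1.dim {x\<in>A. g x = 0}"
proof -
  interpret lg: Vector_Spaces.linear s1 s2 g by (rule lg)
  define Kr where "Kr = {x\<in>A. g x = 0}"
  obtain K where K: "K \<subseteq> Kr" "vs1.independent K" "Kr \<subseteq> vs1.span K" "card K = vs1.dim Kr"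
    using vs1.basis_exists by blast
  obtain Bs where Bs: "K \<subseteq> Bs" "Bs \<subseteq> A" "vs1.independent Bs" "A \<subseteq> vs1.span Bs"
    using vs1.maximal_independent_subset_extend[of K A] K unfolding Kr_def by blast
  have fBs: "finite Bs" using vs1.independent_span_bound[OF F(1) Bs(3)] Bs(2) F(2) by auto
  have dA: "vs1.dim A = card Bs" using vs1.basis_card_eq_dim[OF Bs(2) Bs(4) Bs(3)] by simp
  define C where "C = Bs - K"
  have cBs: "card Bs = card K + card C" unfolding C_def using fBs Bs(1)
    by (metis card_Diff_subset finite_subset card_mono le_add_diff_inverse)
  have spBs: "vs1.span Bs = A" using vs1.span_subspace[OF Bs(2) Bs(4) A] .
  have spC: "vs1.span C \<subseteq> A" unfolding C_def using vs1.span_mono[of "Bs - K" Bs] spBs by auto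
  have inj: "inj_on g (vs1.span C)"
    unfolding lg.inj_on_iff_eq_0[OF vs1.subspace_span]
  proof (intro ballI impI)
    fix x assume xC: "x \<in> vs1.span C" and gx: "g x = 0"
    then have "x \<in> Kr" using spC unfolding Kr_def by auto
    then have xK: "x \<in> vs1.span K" using K(3) by auto
    have "K \<union> C = Bs" unfolding C_def using Bs(1) by auto
    then show "x = 0" using vs1.span_disjoint_zero[of K C x] Bs(3) fBs xK xC unfolding C_def by auto
  qed
  have indC: "vs1.independent C" unfolding C_def using vs1.independent_mono[OF Bs(3)] by auto
  have indgC: "vs2.independent (g ` C)" using lg.independent_injective_image[OF indC inj] .
  have cgC: "card (g ` C) = card C" using card_image inj_on_subset[OF inj vs1.span_superset] by blast
  have "g ` A = vs2.span (g ` Bs)" using lg.span_image[of Bs] spBs by simp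
  also have "\<dots> = vs2.span (g ` C)"
  proof
    show "vs2.span (g ` C) \<subseteq> vs2.span (g ` Bs)" unfolding C_def by (intro vs2.span_mono) auto
    have "g ` Bs \<subseteq> vs2.span (g ` C)"
    proof
      fix y assume "y \<in> g ` Bs"
      then obtain b where b: "b \<in> Bs" "y = g b" by auto
      show "y \<in> vs2.span (g ` C)"
      proof (cases "b \<in> K")
        case True
        then have "g b = 0" using K(1) unfolding Kr_def by auto
        then show ?thesis using b vs2.span_zero by simp
      next
        case False
        then show ?thesis using b unfolding C_def by (auto intro: vs2.span_base)
      qed
    qed
    then show "vs2.span (g ` Bs) \<subseteq> vs2.span (g ` C)"
      using vs2.span_minimal[OF _ vs2.subspace_span] by blast
  qed
  finally have "vs2.dim (g ` A) = card C"
    using vs2.dim_span_eq_card_independent[OF indgC] cgC by simp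
  then show ?thesis using dA cBs K(4) unfolding Kr_def by simp
qed

lemma lin_on_image_subspace:
  assumes A: "vs1.subspace A" and f: "lin_on s1 s2 A f"
  shows "vs2.subspace (f ` A)"
proof -
  obtain g where g: "Vector_Spaces.linear s1 s2 g" "\<forall>x\<in>A. g x = f x" using lin_extend[OF A f] by blast
  have "f ` A = g ` A" using g(2) by (intro image_cong) auto
  interpret lg: Vector_Spaces.linear s1 s2 g by (rule g(1))
  show ?thesis using lg.subspace_image[OF A] \<open>f ` A = g ` A\<close> by simp
qed

lemma lin_on_span_image:
  assumes A: "vs1.subspace A" and f: "lin_on s1 s2 A f" and BA: "B \<subseteq> A"
  shows "f ` vs1.span B = vs2.span (f ` B)"
proof -
  obtain g where g: "Vector_Spaces.linear s1 s2 g" "\<forall>x\<in>A. g x = f x" using lin_extend[OF A f] by blast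
  have spA: "vs1.span B \<subseteq> A" using vs1.span_minimal[OF BA A] .
  have "f ` vs1.span B = g ` vs1.span B" using g(2) spA by (intro image_cong) auto
  also have "\<dots> = vs2.span (g ` B)"
  proof -
    interpret lg: Vector_Spaces.linear s1 s2 g by (rule g(1))
    show ?thesis using lg.span_image by simp
  qed
  also have "g ` B = f ` B" using g(2) BA by (intro image_cong) auto
  finally show ?thesis .
qed

lemma rank_key:
  assumes A: "vs1.subspace A" and F: "finite F" "A \<subseteq> vs1.span F"
    and B: "vs1.subspace B" "B \<subseteq> A" and h: "lin_on s1 s2 A h"
  shows "vs1.dim B + vs2.dim (h ` A) \<le> vs1.dim A + vs2.dim (h ` B)"
proof -
  obtain g where g: "Vector_Spaces.linear s1 s2 g" "\<forall>x\<in>A. g x = h x" using lin_extend[OF A h] by blast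
  have hA: "h ` A = g ` A" using g(2) by (intro image_cong) auto
  have hB: "h ` B = g ` B" using g(2) B(2) by (intro image_cong) auto
  have rA: "vs1.dim A = vs2.dim (g ` A) + vs1.dim {x\<in>A. g x = 0}"
    using rank_nullity_lin[OF A F g(1)] .
  have rB: "vs1.dim B = vs2.dim (g ` B) + vs1.dim {x\<in>B. g x = 0}"
    using rank_nullity_lin[OF B(1) F(1) _ g(1)] B(2) F(2) by blast
  have "vs1.dim {x\<in>B. g x = 0} \<le> vs1.dim {x\<in>A. g x = 0}"
    using vs1.dim_mono_fd[OF _ _ F(1), of "{x\<in>B. g x = 0}" "{x\<in>A. g x = 0}"] B(2) F(2) by blast
  then show ?thesis using rA rB hA hB by simp
qed

lemma dim_inj_image:
  assumes A: "vs1.subspace A" and F: "finite F" "A \<subseteq> vs1.span F"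
    and f: "lin_on s1 s2 A f" and inj: "inj_on f A"
  shows "vs2.dim (f ` A) = vs1.dim A"
proof -
  obtain g where g: "Vector_Spaces.linear s1 s2 g" "\<forall>x\<in>A. g x = f x" using lin_extend[OF A f] by blast
  have hA: "f ` A = g ` A" using g(2) by (intro image_cong) auto
  have "{x\<in>A. g x = 0} = {0}"
  proof -
    have "0 \<in> A" using A vs1.subspace_0 by blast
    moreover have "g 0 = 0"
    proof -
      interpret lg: Vector_Spaces.linear s1 s2 g by (rule g(1))
      show ?thesis by simp
    qed
    moreover have "x = 0" if "x \<in> A" "g x = 0" for x
      using inj that g(2) \<open>0 \<in> A\<close> \<open>g 0 = 0\<close> unfolding inj_on_def by metis
    ultimately show ?thesis by auto
  qed
  moreover have "vs1.dim {0::'b} = 0" using vs1.dim_span[of "{}"] vs1.dim_eq_card_independent[OF vs1.independent_empty] by simp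
  ultimately show ?thesis using rank_nullity_lin[OF A F g(1)] hA by simp
qed

end



lemma sum_fun_apply: "(\<Sum>x\<in>S. f x) (g::'b) = (\<Sum>x\<in>S. f x g)"
  by (induction S rule: infinite_finite_induct) auto

lemma vs_fun: "vector_space (fun_scale :: 'k::field \<Rightarrow> ('b \<Rightarrow> 'k) \<Rightarrow> ('b \<Rightarrow> 'k))"
  unfolding vector_space_def fun_scale_def by (simp add: fun_eq_iff algebra_simps)

definition dlt :: "'b \<Rightarrow> 'b \<Rightarrow> 'k::field" where
  "dlt \<beta> = (\<lambda>\<gamma>. if \<gamma> = \<beta> then 1 else 0)"

definition fs :: "'b set \<Rightarrow> ('b \<Rightarrow> 'k::field) set" where
  "fs E = {v. finite {\<beta>. v \<beta> \<noteq> 0} \<and> (\<forall>\<beta>. v \<beta> \<noteq> 0 \<longrightarrow> \<beta> \<in> E)}"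

lemma inj_dlt: "inj (dlt :: 'b \<Rightarrow> 'b \<Rightarrow> 'k::field)"
proof (rule injI)
  fix x y assume "(dlt x :: 'b \<Rightarrow> 'k) = dlt y"
  then have "(dlt x :: 'b \<Rightarrow> 'k) x = dlt y x" by simp
  then show "x = y" unfolding dlt_def by (auto split: if_splits)
qed

lemma sum_dlt_apply:
  assumes "finite S" "\<beta> \<in> S"
  shows "(\<Sum>\<gamma>\<in>S. fun_scale (u \<gamma>) (dlt \<gamma> :: 'b \<Rightarrow> 'k::field)) \<beta> = u \<beta>"
proof -
  have "(\<Sum>\<gamma>\<in>S. fun_scale (u \<gamma>) (dlt \<gamma> :: 'b \<Rightarrow> 'k)) \<beta> = (\<Sum>\<gamma>\<in>S. if \<gamma> = \<beta> then u \<gamma> else 0)"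
    unfolding sum_fun_apply fun_scale_def dlt_def by (intro sum.cong) auto
  also have "\<dots> = u \<beta>" using assms by (simp add: sum.delta')
  finally show ?thesis .
qed

lemma indep_dlt: "module.independent fun_scale ((dlt :: 'b \<Rightarrow> 'b \<Rightarrow> 'k::field) ` E)"
proof -
  interpret vector_space "fun_scale :: 'k \<Rightarrow> ('b \<Rightarrow> 'k) \<Rightarrow> ('b \<Rightarrow> 'k)" by (rule vs_fun)
  show ?thesis
    unfolding independent_explicit_finite_subsets
  proof (intro allI impI ballI)
    fix S u v assume S: "S \<subseteq> dlt ` E" "finite S" and s0: "(\<Sum>v\<in>S. fun_scale (u v) v) = (0 :: 'b \<Rightarrow> 'k)"
      and vS: "v \<in> S"
    obtain T where T: "T \<subseteq> E" "S = dlt ` T" using S(1) subset_image_iff by metis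
    have injT: "inj_on (dlt :: 'b \<Rightarrow> 'b \<Rightarrow> 'k) T" using inj_dlt by (rule inj_on_subset) simp
    have fT: "finite T" using S(2) T(2) finite_imageD[OF _ injT] by simp
    obtain \<beta> where \<beta>: "\<beta> \<in> T" "v = dlt \<beta>" using vS T(2) by auto
    have "(\<Sum>v\<in>S. fun_scale (u v) v) = (\<Sum>\<gamma>\<in>T. fun_scale (u (dlt \<gamma>)) (dlt \<gamma> :: 'b \<Rightarrow> 'k))"
      unfolding T(2) using sum.reindex[OF injT] by simp
    then have "(\<Sum>\<gamma>\<in>T. fun_scale (u (dlt \<gamma>)) (dlt \<gamma> :: 'b \<Rightarrow> 'k)) \<beta> = 0" using s0 by simp
    then show "u v = 0" using sum_dlt_apply[OF fT \<beta>(1), of "\<lambda>\<gamma>. u (dlt \<gamma>)"] \<beta>(2) by simp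
  qed
qed

lemma fs_span:
  assumes fE: "finite E"
  shows "fs E = module.span fun_scale ((dlt :: 'b \<Rightarrow> 'b \<Rightarrow> 'k::field) ` E)"
proof -
  interpret vector_space "fun_scale :: 'k \<Rightarrow> ('b \<Rightarrow> 'k) \<Rightarrow> ('b \<Rightarrow> 'k)" by (rule vs_fun)
  show ?thesis
  proof
    show "fs E \<subseteq> span (dlt ` E)"
    proof
      fix v :: "'b \<Rightarrow> 'k" assume v: "v \<in> fs E"
      have "v = (\<Sum>\<gamma>\<in>E. fun_scale (v \<gamma>) (dlt \<gamma>))"
      proof
        fix \<beta>
        show "v \<beta> = (\<Sum>\<gamma>\<in>E. fun_scale (v \<gamma>) (dlt \<gamma>)) \<beta>"
        proof (cases "\<beta> \<in> E")
          case True then show ?thesis using sum_dlt_apply[OF fE True, of v] by simp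
        next
          case False
          then have "v \<beta> = 0" using v unfolding fs_def by auto
          moreover have "(\<Sum>\<gamma>\<in>E. fun_scale (v \<gamma>) (dlt \<gamma> :: 'b \<Rightarrow> 'k)) \<beta> = 0"
            unfolding sum_fun_apply fun_scale_def dlt_def using False by (intro sum.neutral) auto
          ultimately show ?thesis by simp
        qed
      qed
      also have "\<dots> \<in> span (dlt ` E)"
        by (rule span_sum) (auto intro: span_scale span_base)
      finally show "v \<in> span (dlt ` E)" .
    qed
  next
    have sub: "subspace (fs E :: ('b \<Rightarrow> 'k) set)"
    proof (rule subspaceI)
      show "0 \<in> fs E" unfolding fs_def by simp
    next
      fix x y :: "'b \<Rightarrow> 'k" assume x: "x \<in> fs E" and y: "y \<in> fs E"
      have "{\<beta>. (x + y) \<beta> \<noteq> 0} \<subseteq> {\<beta>. x \<beta> \<noteq> 0} \<union> {\<beta>. y \<beta> \<noteq> 0}" by auto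
      then show "x + y \<in> fs E" using x y unfolding fs_def by (auto intro: finite_subset)
    next
      fix c and x :: "'b \<Rightarrow> 'k" assume x: "x \<in> fs E"
      have "{\<beta>. fun_scale c x \<beta> \<noteq> 0} \<subseteq> {\<beta>. x \<beta> \<noteq> 0}" unfolding fun_scale_def by auto
      then show "fun_scale c x \<in> fs E" using x unfolding fs_def fun_scale_def by (auto intro: finite_subset)
    qed
    have "dlt ` E \<subseteq> fs E" unfolding fs_def dlt_def by (auto split: if_splits)
    then show "span (dlt ` E) \<subseteq> fs E" using span_minimal[OF _ sub] by blast
  qed
qed

lemma dim_fs:
  assumes fE: "finite E"
  shows "vector_space.dim fun_scale (fs E :: ('b \<Rightarrow> 'k::field) set) = card E"
proof -
  interpret vector_space "fun_scale :: 'k \<Rightarrow> ('b \<Rightarrow> 'k) \<Rightarrow> ('b \<Rightarrow> 'k)" by (rule vs_fun)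
  have "dim (fs E :: ('b \<Rightarrow> 'k) set) = card ((dlt :: 'b \<Rightarrow> 'b \<Rightarrow> 'k) ` E)"
    unfolding fs_span[OF fE] using dim_span_eq_card_independent[OF indep_dlt] by simp
  also have "\<dots> = card E" using inj_dlt by (intro card_image) (rule inj_on_subset, auto)
  finally show ?thesis .
qed

lemma bsum_map_image:
  "bsum_map B a b ` bsum_space R B a = (fs {\<beta>\<in>R. a \<in> B \<beta> \<and> b \<in> B \<beta>} :: ('x \<Rightarrow> 'k::field) set)"
proof
  show "bsum_map B a b ` bsum_space R B a \<subseteq> (fs {\<beta>\<in>R. a \<in> B \<beta> \<and> b \<in> B \<beta>} :: ('x \<Rightarrow> 'k) set)"
  proof
    fix w :: "'x \<Rightarrow> 'k" assume "w \<in> bsum_map B a b ` bsum_space R B a"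
    then obtain v where v: "v \<in> bsum_space R B a" "w = bsum_map B a b v" by auto
    have "{\<beta>. w \<beta> \<noteq> 0} \<subseteq> {\<beta>. v \<beta> \<noteq> 0}" unfolding v(2) bsum_map_def by auto
    then show "w \<in> (fs {\<beta>\<in>R. a \<in> B \<beta> \<and> b \<in> B \<beta>} :: ('x \<Rightarrow> 'k) set)"
      using v unfolding fs_def bsum_space_def bsum_map_def by (auto intro: finite_subset split: if_splits)
  qed
  show "(fs {\<beta>\<in>R. a \<in> B \<beta> \<and> b \<in> B \<beta>} :: ('x \<Rightarrow> 'k) set) \<subseteq> bsum_map B a b ` bsum_space R B a"
  proof
    fix w :: "'x \<Rightarrow> 'k" assume w: "w \<in> fs {\<beta>\<in>R. a \<in> B \<beta> \<and> b \<in> B \<beta>}"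
    have "w \<in> bsum_space R B a" using w unfolding fs_def bsum_space_def by auto
    moreover have "bsum_map B a b w = w" using w unfolding fs_def bsum_map_def by (auto simp: fun_eq_iff)
    ultimately show "w \<in> bsum_map B a b ` bsum_space R B a" by (metis image_eqI)
  qed
qed

lemma lin_on_mono: "lin_on s1 s2 A f \<Longrightarrow> B \<subseteq> A \<Longrightarrow> lin_on s1 s2 B f"
  unfolding lin_on_def by blast

lemma barcode_rank:
  fixes sc :: "'k::field \<Rightarrow> 'v::ab_group_add \<Rightarrow> 'v" and Sp :: "'t::linorder \<Rightarrow> 'v set"
    and R :: "'x set" and B :: "'x \<Rightarrow> 't set"
  assumes vs: "vector_space sc"
    and sub: "\<And>t. module.subspace sc (Sp t)"
    and fd: "\<And>t. \<exists>F. finite F \<and> Sp t \<subseteq> module.span sc F"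
    and mp: "\<And>a b. a \<le> b \<Longrightarrow> Mp a b ` Sp a \<subseteq> Sp b \<and> lin_on sc sc (Sp a) (Mp a b)"
    and bc: "barcode_of sc Sp Mp R B"
  shows "finite {\<beta>\<in>R. t \<in> B \<beta>}"
    and "a \<le> b \<Longrightarrow> vector_space.dim sc (Mp a b ` Sp a) = card {\<beta>\<in>R. a \<in> B \<beta> \<and> b \<in> B \<beta>}"
proof -
  interpret vp: vector_space_pair sc "fun_scale :: 'k \<Rightarrow> ('x \<Rightarrow> 'k) \<Rightarrow> ('x \<Rightarrow> 'k)"
    unfolding vector_space_pair_def using vs vs_fun by blast
  obtain \<Phi> where \<Phi>: "piso sc Sp Mp fun_scale (bsum_space R B) (bsum_map B) \<Phi>"
    using bc unfolding barcode_of_def by blast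
  have lin\<Phi>: "lin_on sc fun_scale (Sp t) (\<Phi> t)" for t using \<Phi> unfolding piso_def phom_def by blast
  have bij\<Phi>: "bij_betw (\<Phi> t) (Sp t) (bsum_space R B t)" for t using \<Phi> unfolding piso_def by blast
  have nat\<Phi>: "\<And>a b x. a \<le> b \<Longrightarrow> x \<in> Sp a \<Longrightarrow> \<Phi> b (Mp a b x) = bsum_map B a b (\<Phi> a x)"
    using \<Phi> unfolding piso_def phom_def by blast
  have finE: "finite {\<beta>\<in>R. t \<in> B \<beta>}" for t
  proof -
    obtain F where F: "finite F" "Sp t \<subseteq> vp.vs1.span F" using fd by blast
    obtain Ba where Ba: "Ba \<subseteq> Sp t" "Sp t \<subseteq> vp.vs1.span Ba" "finite Ba"
      using vp.vs1.fd_finite_basis[OF F(2) F(1)] by metis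
    have spBa: "vp.vs1.span Ba = Sp t" using vp.vs1.span_subspace[OF Ba(1) Ba(2) sub] .
    have "bsum_space R B t = \<Phi> t ` Sp t" using bij\<Phi> unfolding bij_betw_def by simp
    also have "\<dots> = vp.vs2.span (\<Phi> t ` Ba)"
      using vp.lin_on_span_image[OF sub lin\<Phi> Ba(1)] spBa by simp
    finally have bs: "bsum_space R B t = vp.vs2.span (\<Phi> t ` Ba)" .
    have "(dlt :: 'x \<Rightarrow> 'x \<Rightarrow> 'k) ` {\<beta>\<in>R. t \<in> B \<beta>} \<subseteq> bsum_space R B t"
      unfolding bsum_space_def dlt_def by (auto split: if_splits)
    then have sb: "(dlt :: 'x \<Rightarrow> 'x \<Rightarrow> 'k) ` {\<beta>\<in>R. t \<in> B \<beta>} \<subseteq> vp.vs2.span (\<Phi> t ` Ba)"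
      using bs by simp
    have "finite ((dlt :: 'x \<Rightarrow> 'x \<Rightarrow> 'k) ` {\<beta>\<in>R. t \<in> B \<beta>})"
      using vp.vs2.independent_span_bound[OF finite_imageI[OF Ba(3)] indep_dlt sb] by blast
    moreover have "inj_on (dlt :: 'x \<Rightarrow> 'x \<Rightarrow> 'k) {\<beta>\<in>R. t \<in> B \<beta>}" using inj_dlt by (rule inj_on_subset) simp
    ultimately show ?thesis by (rule finite_imageD)
  qed
  then show "finite {\<beta>\<in>R. t \<in> B \<beta>}" .
  assume ab: "a \<le> b"
  define C where "C = Mp a b ` Sp a"
  have CS: "C \<subseteq> Sp b" using mp[OF ab] unfolding C_def by blast
  have Csub: "vp.vs1.subspace C"
  proof -
    interpret vv: vector_space_pair sc sc unfolding vector_space_pair_def using vs by blast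
    show ?thesis unfolding C_def using vv.lin_on_image_subspace[OF sub] mp[OF ab] by blast
  qed
  obtain F where F: "finite F" "Sp b \<subseteq> vp.vs1.span F" using fd by blast
  have injb: "inj_on (\<Phi> b) C" using bij\<Phi>[of b] CS unfolding bij_betw_def by (auto intro: inj_on_subset)
  have d1: "vp.vs2.dim (\<Phi> b ` C) = vp.vs1.dim C"
    using vp.dim_inj_image[OF Csub F(1) _ lin_on_mono[OF lin\<Phi> CS] injb] CS F(2) by blast
  have d2: "\<Phi> b ` C = bsum_map B a b ` bsum_space R B a"
  proof -
    have "\<Phi> b ` C = bsum_map B a b ` \<Phi> a ` Sp a"
      unfolding C_def image_image using nat\<Phi>[OF ab] by (intro image_cong) auto
    then show ?thesis using bij\<Phi> unfolding bij_betw_def by simp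
  qed
  have fab: "finite {\<beta>\<in>R. a \<in> B \<beta> \<and> b \<in> B \<beta>}"
    using finE[of a] by (rule rev_finite_subset) auto
  have "vector_space.dim sc (Mp a b ` Sp a) = vp.vs1.dim C" unfolding C_def ..
  also have "\<dots> = vp.vs2.dim (bsum_map B a b ` bsum_space R B a)" using d1 d2 by simp
  also have "\<dots> = vp.vs2.dim (fs {\<beta>\<in>R. a \<in> B \<beta> \<and> b \<in> B \<beta>} :: ('x \<Rightarrow> 'k) set)"
    unfolding bsum_map_image ..
  also have "\<dots> = card {\<beta>\<in>R. a \<in> B \<beta> \<and> b \<in> B \<beta>}" by (rule dim_fs[OF fab])
  finally show "vector_space.dim sc (Mp a b ` Sp a) = card {\<beta>\<in>R. a \<in> B \<beta> \<and> b \<in> B \<beta>}" .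
qed



definition hall_cond :: "'a set \<Rightarrow> ('a \<times> 'b) set \<Rightarrow> bool" where
  "hall_cond A E \<longleftrightarrow> (\<forall>S\<subseteq>A. finite S \<longrightarrow> card S \<le> card (E `` S))"

lemma hall_infinite:
  fixes N :: "('a \<times> 'b) set"
  assumes NA: "N \<subseteq> A \<times> UNIV"
    and fin: "\<And>a. a \<in> A \<Longrightarrow> finite (N `` {a})"
    and H: "hall_cond A N"
  shows "\<exists>M\<subseteq>N. (\<forall>a\<in>A. \<exists>!b. (a, b) \<in> M) \<and> (\<forall>a a' b. (a, b) \<in> M \<longrightarrow> (a', b) \<in> M \<longrightarrow> a = a')"
proof -
  have finS: "finite (E `` S)" if "E \<subseteq> N" "finite S" "S \<subseteq> A" for E S
  proof -
    have "E `` S \<subseteq> (\<Union>a\<in>S. N `` {a})" using that by auto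
    moreover have "finite (\<Union>a\<in>S. N `` {a})" using that fin by auto
    ultimately show ?thesis by (rule finite_subset)
  qed
  define \<A> where "\<A> = {D. D \<subseteq> N \<and> hall_cond A (N - D)}"
  have "\<exists>M\<in>\<A>. \<forall>X\<in>\<A>. M \<subseteq> X \<longrightarrow> X = M"
  proof (rule subset_Zorn_nonempty)
    show "\<A> \<noteq> {}" using H unfolding \<A>_def by (auto intro!: exI[of _ "{}"])
  next
    fix \<C> assume Cne: "\<C> \<noteq> {}" and ch: "subset.chain \<A> \<C>"
    have CA: "\<C> \<subseteq> \<A>" using ch by (auto simp: subset_chain_def)
    show "\<Union>\<C> \<in> \<A>"
      unfolding \<A>_def
    proof (intro CollectI conjI)
      show "\<Union>\<C> \<subseteq> N" using CA by (auto simp: \<A>_def)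
      show "hall_cond A (N - \<Union>\<C>)"
        unfolding hall_cond_def
      proof (intro allI impI)
        fix S assume SA: "S \<subseteq> A" and fS: "finite S"
        define Q where "Q = (N \<inter> (S \<times> UNIV)) \<inter> \<Union>\<C>"
        have "Q \<subseteq> (\<Union>a\<in>S. {a} \<times> N `` {a})" unfolding Q_def by auto
        moreover have "finite (\<Union>a\<in>S. {a} \<times> N `` {a})" using fS SA fin by auto
        ultimately have fQ: "finite Q" by (rule finite_subset)
        obtain D where D: "D \<in> \<C>" "Q \<subseteq> D"
          using finite_subset_Union_chain[OF fQ _ Cne ch] unfolding Q_def by blast
        have DA: "D \<in> \<A>" using D CA by auto
        have eq: "(N - D) `` S = (N - \<Union>\<C>) `` S"
          using D unfolding Q_def by blast
        show "card S \<le> card ((N - \<Union>\<C>) `` S)"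
          using DA SA fS unfolding \<A>_def hall_cond_def eq[symmetric] by auto
      qed
    qed
  qed
  then obtain D where DA: "D \<in> \<A>" and Dmax: "\<And>X. X \<in> \<A> \<Longrightarrow> D \<subseteq> X \<Longrightarrow> X = D" by blast
  define E where "E = N - D"
  have EN: "E \<subseteq> N" unfolding E_def by auto
  have HE: "hall_cond A E" using DA unfolding \<A>_def E_def by auto
  have one: "card (E `` {a}) = 1" if aA: "a \<in> A" for a
  proof (rule ccontr)
    assume ne1: "card (E `` {a}) \<noteq> 1"
    have "card {a} \<le> card (E `` {a})" using HE aA unfolding hall_cond_def by auto
    then have "card (E `` {a}) \<ge> 2" using ne1 by auto
    have fa0: "finite (E `` {a})" using finS[OF EN] aA by auto
    have "\<not> card (E `` {a}) \<le> Suc 0" using \<open>card (E `` {a}) \<ge> 2\<close> by auto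
    then obtain x y where xy: "x \<in> E `` {a}" "y \<in> E `` {a}" "x \<noteq> y"
      using card_le_Suc0_iff_eq[OF fa0] by blast
    have bad: "\<exists>T. T \<subseteq> A \<and> finite T \<and> a \<notin> T \<and> card (E `` T \<union> (E `` {a} - {z})) \<le> card T"
      if z: "z \<in> E `` {a}" for z
    proof -
      let ?X = "insert (a, z) D"
      have "?X \<noteq> D" using z unfolding E_def by auto
      moreover have "?X \<subseteq> N" using z DA unfolding E_def \<A>_def by auto
      ultimately have "\<not> hall_cond A (N - ?X)" using Dmax[of ?X] unfolding \<A>_def by auto
      then obtain S where S: "S \<subseteq> A" "finite S" "card S > card ((N - ?X) `` S)"
        unfolding hall_cond_def by (auto simp: not_le)
      have NX: "N - ?X = E - {(a, z)}" unfolding E_def by auto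
      have aS: "a \<in> S"
      proof (rule ccontr)
        assume "a \<notin> S"
        then have "(N - ?X) `` S = E `` S" unfolding NX by auto
        moreover have "card S \<le> card (E `` S)" using HE S(1,2) unfolding hall_cond_def by blast
        ultimately show False using S(3) by simp
      qed
      define T where "T = S - {a}"
      have img: "(N - ?X) `` S = E `` T \<union> (E `` {a} - {z})"
        unfolding NX T_def using aS by auto
      have cS: "card S = card T + 1" unfolding T_def
        using card_Suc_Diff1[OF S(2) aS] by simp
      have "T \<subseteq> A" "finite T" "a \<notin> T" using S unfolding T_def by auto
      moreover have "card (E `` T \<union> (E `` {a} - {z})) \<le> card T" using S(3) img cS by simp
      ultimately show ?thesis by blast
    qed
    obtain T1 where T1: "T1 \<subseteq> A" "finite T1" "a \<notin> T1" "card (E `` T1 \<union> (E `` {a} - {x})) \<le> card T1"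
      using bad[OF xy(1)] by blast
    obtain T2 where T2: "T2 \<subseteq> A" "finite T2" "a \<notin> T2" "card (E `` T2 \<union> (E `` {a} - {y})) \<le> card T2"
      using bad[OF xy(2)] by blast
    define U1 where "U1 = E `` T1 \<union> (E `` {a} - {x})"
    define U2 where "U2 = E `` T2 \<union> (E `` {a} - {y})"
    have fa: "finite (E `` {a})" using finS[OF EN] aA by auto
    have fU1: "finite U1" unfolding U1_def using finS[OF EN T1(2) T1(1)] fa by auto
    have fU2: "finite U2" unfolding U2_def using finS[OF EN T2(2) T2(1)] fa by auto
    have "E `` (insert a (T1 \<union> T2)) \<subseteq> U1 \<union> U2" unfolding U1_def U2_def using xy(3) by auto
    then have c1: "card (E `` (insert a (T1 \<union> T2))) \<le> card (U1 \<union> U2)"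
      using fU1 fU2 by (intro card_mono) auto
    have "E `` (T1 \<inter> T2) \<subseteq> U1 \<inter> U2" unfolding U1_def U2_def by auto
    then have c2: "card (E `` (T1 \<inter> T2)) \<le> card (U1 \<inter> U2)"
      using fU1 fU2 by (intro card_mono) auto
    have h1: "card (insert a (T1 \<union> T2)) \<le> card (E `` (insert a (T1 \<union> T2)))"
    proof -
      have "insert a (T1 \<union> T2) \<subseteq> A" "finite (insert a (T1 \<union> T2))" using T1 T2 aA by auto
      then show ?thesis using HE unfolding hall_cond_def by blast
    qed
    have h2: "card (T1 \<inter> T2) \<le> card (E `` (T1 \<inter> T2))"
    proof -
      have "T1 \<inter> T2 \<subseteq> A" "finite (T1 \<inter> T2)" using T1 T2 by auto
      then show ?thesis using HE unfolding hall_cond_def by blast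
    qed
    have "card (insert a (T1 \<union> T2)) = card (T1 \<union> T2) + 1" using T1 T2 by simp
    moreover have "card (T1 \<union> T2) + card (T1 \<inter> T2) = card T1 + card T2"
      using card_Un_Int[OF T1(2) T2(2)] by simp
    moreover have "card (U1 \<union> U2) + card (U1 \<inter> U2) = card U1 + card U2"
      using card_Un_Int[OF fU1 fU2] by simp
    ultimately show False using c1 c2 h1 h2 T1(4) T2(4) unfolding U1_def[symmetric] U2_def[symmetric]
      by linarith
  qed
  show ?thesis
  proof (intro exI[of _ E] conjI allI impI ballI EN)
    fix a assume aA: "a \<in> A"
    from one[OF aA] obtain b where "E `` {a} = {b}" by (auto simp: card_Suc_eq)
    then show "\<exists>!b. (a, b) \<in> E" by (metis Image_singleton_iff singleton_iff)
  next
    fix a a' b assume ab: "(a, b) \<in> E" and ab': "(a', b) \<in> E"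
    show "a = a'"
    proof (rule ccontr)
      assume ne: "a \<noteq> a'"
      have aA: "a \<in> A" "a' \<in> A" using ab ab' EN NA by auto
      have sing: "E `` {x} = {y}" if "x \<in> A" "(x, y) \<in> E" for x y
      proof -
        from one[OF that(1)] obtain c where c: "E `` {x} = {c}" by (auto simp: card_Suc_eq)
        with that(2) show ?thesis by auto
      qed
      have "E `` {a} = {b}" using sing aA ab by blast
      moreover have "E `` {a'} = {b}" using sing aA ab' by blast
      ultimately have "E `` {a, a'} = {b}" by auto
      moreover have "card {a, a'} \<le> card (E `` {a, a'})" using HE aA unfolding hall_cond_def by auto
      ultimately show False using ne by auto
    qed
  qed
qed



fun gsum :: "('t \<Rightarrow> 't \<Rightarrow> int) \<Rightarrow> ('t \<times> 't) list \<Rightarrow> int" where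
  "gsum r [] = 0"
| "gsum r [p] = r (fst p) (snd p)"
| "gsum r (p # q # ps) = r (fst p) (snd p) - r (fst p) (snd q) + gsum r (q # ps)"

definition pchain :: "('t::linorder \<times> 't) list \<Rightarrow> bool" where
  "pchain ps \<longleftrightarrow> sorted_wrt (\<lambda>p q. fst p \<le> fst q \<and> snd p \<le> snd q) ps \<and> (\<forall>p\<in>set ps. fst p \<le> snd p)"

lemma pchain_tl: "pchain (p # ps) \<Longrightarrow> pchain ps"
  unfolding pchain_def by auto

lemma gsum_sub_mono:
  assumes d: "\<And>a b b'. a \<le> b \<Longrightarrow> b \<le> b' \<Longrightarrow> ra a b - ra a b' \<le> rb a b - rb a b'"
    and l: "\<And>a b. a \<le> b \<Longrightarrow> ra a b \<le> rb a b"
    and c: "pchain (ps :: ('t::linorder \<times> 't) list)"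
  shows "gsum ra ps \<le> gsum rb ps"
  using c
proof (induction ps rule: induct_list012)
  case 1 then show ?case by simp
next
  case (2 p) then show ?case using l unfolding pchain_def by auto
next
  case (3 p q ps)
  have ch: "pchain (q # ps)" using 3(3) by (rule pchain_tl)
  have "fst p \<le> snd p" "snd p \<le> snd q" using 3(3) unfolding pchain_def by auto
  then have "ra (fst p) (snd p) - ra (fst p) (snd q) \<le> rb (fst p) (snd p) - rb (fst p) (snd q)"
    using d by blast
  then show ?case using 3(2)[OF ch] by simp
qed

lemma gsum_quot_aux:
  assumes d: "\<And>a' a b. a' \<le> a \<Longrightarrow> a \<le> b \<Longrightarrow> ra a b - ra a' b \<le> rb a b - rb a' b"
    and c: "pchain (ps :: ('t::linorder \<times> 't) list)" and ne: "ps \<noteq> []"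
  shows "gsum ra ps - ra (fst (hd ps)) (snd (hd ps)) \<le> gsum rb ps - rb (fst (hd ps)) (snd (hd ps))"
  using c ne
proof (induction ps rule: induct_list012)
  case 1 then show ?case by simp
next
  case (2 p) then show ?case by simp
next
  case (3 p q ps)
  have ch: "pchain (q # ps)" using 3(3) by (rule pchain_tl)
  have "fst p \<le> fst q" "fst q \<le> snd q" using 3(3) unfolding pchain_def by auto
  then have "ra (fst q) (snd q) - ra (fst p) (snd q) \<le> rb (fst q) (snd q) - rb (fst p) (snd q)"
    using d by blast
  then show ?case using 3(2)[OF ch] by simp
qed

lemma gsum_quot_mono:
  assumes d: "\<And>a' a b. a' \<le> a \<Longrightarrow> a \<le> b \<Longrightarrow> ra a b - ra a' b \<le> rb a b - rb a' b"
    and l: "\<And>a b. a \<le> b \<Longrightarrow> ra a b \<le> rb a b"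
    and c: "pchain (ps :: ('t::linorder \<times> 't) list)"
  shows "gsum ra ps \<le> gsum rb ps"
proof (cases "ps = []")
  case True then show ?thesis by simp
next
  case False
  have "fst (hd ps) \<le> snd (hd ps)" using c False unfolding pchain_def by auto
  then have "ra (fst (hd ps)) (snd (hd ps)) \<le> rb (fst (hd ps)) (snd (hd ps))" using l by blast
  moreover have "gsum ra ps - ra (fst (hd ps)) (snd (hd ps)) \<le> gsum rb ps - rb (fst (hd ps)) (snd (hd ps))"
    apply (rule gsum_quot_aux) using d c False by auto
  ultimately show ?thesis by simp
qed

lemma gsum_count:
  assumes iv: "\<And>\<beta>. \<beta> \<in> R \<Longrightarrow> is_interval (B \<beta>)"
    and fin: "\<And>t. finite {\<beta>\<in>R. t \<in> B \<beta>}"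
    and r: "\<And>a b. a \<le> b \<Longrightarrow> r a b = int (card {\<beta>\<in>R. a \<in> B \<beta> \<and> b \<in> B \<beta>})"
    and c: "pchain (ps :: ('t::linorder \<times> 't) list)"
  shows "gsum r ps = int (card {\<beta>\<in>R. \<exists>q\<in>set ps. fst q \<in> B \<beta> \<and> snd q \<in> B \<beta>})"
  using c
proof (induction ps rule: induct_list012)
  case 1 then show ?case by simp
next
  case (2 p) then show ?case using r unfolding pchain_def by auto
next
  case (3 p q ps)
  have ch: "pchain (q # ps)" using 3(3) by (rule pchain_tl)
  have pq: "fst p \<le> fst q" "snd p \<le> snd q" "fst p \<le> snd p" "fst q \<le> snd q"
    using 3(3) unfolding pchain_def by auto
  have pr: "snd q \<le> snd x" if "x \<in> set (q # ps)" for x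
    using 3(3) that unfolding pchain_def by auto
  define S1 where "S1 = {\<beta>\<in>R. fst p \<in> B \<beta> \<and> snd p \<in> B \<beta>}"
  define S2 where "S2 = {\<beta>\<in>R. \<exists>x\<in>set (q # ps). fst x \<in> B \<beta> \<and> snd x \<in> B \<beta>}"
  define S12 where "S12 = {\<beta>\<in>R. fst p \<in> B \<beta> \<and> snd q \<in> B \<beta>}"
  have conv: "y \<in> B \<beta>" if "\<beta> \<in> R" "x \<in> B \<beta>" "z \<in> B \<beta>" "x \<le> y" "y \<le> z" for \<beta> x y z
    using iv[OF that(1)] that unfolding is_interval_def by blast
  have un: "{\<beta>\<in>R. \<exists>x\<in>set (p # q # ps). fst x \<in> B \<beta> \<and> snd x \<in> B \<beta>} = S1 \<union> S2"
    unfolding S1_def S2_def by auto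
  have int: "S1 \<inter> S2 = S12"
  proof
    show "S1 \<inter> S2 \<subseteq> S12"
    proof
      fix \<beta> assume "\<beta> \<in> S1 \<inter> S2"
      then have "\<beta> \<in> R \<and> fst p \<in> B \<beta> \<and> snd p \<in> B \<beta> \<and> (\<exists>x\<in>set (q # ps). fst x \<in> B \<beta> \<and> snd x \<in> B \<beta>)"
        unfolding S1_def S2_def by blast
      then obtain x where x: "\<beta> \<in> R" "fst p \<in> B \<beta>" "snd p \<in> B \<beta>" "x \<in> set (q # ps)" "fst x \<in> B \<beta>" "snd x \<in> B \<beta>"
        by blast
      have "snd q \<in> B \<beta>" using conv[OF x(1) x(2) x(6)] pq pr[OF x(4)] by simp
      then show "\<beta> \<in> S12" using x unfolding S12_def by auto
    qed
    show "S12 \<subseteq> S1 \<inter> S2"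
    proof
      fix \<beta> assume "\<beta> \<in> S12"
      then have b: "\<beta> \<in> R" "fst p \<in> B \<beta>" "snd q \<in> B \<beta>" unfolding S12_def by auto
      have "snd p \<in> B \<beta>" using conv[OF b(1) b(2) b(3)] pq by simp
      moreover have "fst q \<in> B \<beta>" using conv[OF b(1) b(2) b(3)] pq by simp
      ultimately show "\<beta> \<in> S1 \<inter> S2" using b unfolding S1_def S2_def by auto
    qed
  qed
  have f1: "finite S1" unfolding S1_def using fin[of "fst p"] by (rule rev_finite_subset) auto
  have "S2 \<subseteq> (\<Union>x\<in>set (q # ps). {\<beta>\<in>R. fst x \<in> B \<beta>})" unfolding S2_def by blast
  moreover have "finite (\<Union>x\<in>set (q # ps). {\<beta>\<in>R. fst x \<in> B \<beta>})" using fin by blast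
  ultimately have f2: "finite S2" by (rule finite_subset)
  have "int (card (S1 \<union> S2)) = int (card S1) + int (card S2) - int (card S12)"
    using card_Un_Int[OF f1 f2] int by simp
  moreover have "r (fst p) (snd p) = int (card S1)" unfolding S1_def using r pq by simp
  moreover have "r (fst p) (snd q) = int (card S12)" unfolding S12_def using r pq by simp
  moreover have "gsum r (q # ps) = int (card S2)" unfolding S2_def using 3(2)[OF ch] by simp
  ultimately show ?case using un by simp
qed

lemma chain_exists:
  fixes P :: "('t::linorder \<times> 't) set"
  assumes fP: "finite P" and le: "\<And>p. p \<in> P \<Longrightarrow> fst p \<le> snd p"
  shows "\<exists>ps. pchain ps \<and> set ps \<subseteq> P \<and> (\<forall>p\<in>P. \<exists>q\<in>set ps. fst p \<le> fst q \<and> snd q \<le> snd p)"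
proof -
  define P' where "P' = {p\<in>P. \<forall>q\<in>P. fst p \<le> fst q \<and> snd q \<le> snd p \<longrightarrow> q = p}"
  have fP': "finite P'" unfolding P'_def using fP by auto
  define ps where "ps = sorted_list_of_set P'"
  have sps: "set ps = P'" unfolding ps_def using fP' by simp
  have ss: "sorted_wrt (<) ps" unfolding ps_def by (rule strict_sorted_list_of_set)
  have "sorted_wrt (\<lambda>p q. fst p \<le> fst q \<and> snd p \<le> snd q) ps"
  proof (rule sorted_wrt_mono_rel[OF _ ss])
    fix p q assume pq: "p \<in> set ps" "q \<in> set ps" "p < q"
    obtain a b where p: "p = (a, b)" by (cases p)
    obtain c d where q: "q = (c, d)" by (cases q)
    have ac: "a \<le> c" using pq(3) unfolding p q by auto
    have "b \<le> d"
    proof (rule ccontr)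
      assume "\<not> b \<le> d"
      then have "d \<le> b" by simp
      have pP': "p \<in> P'" "q \<in> P'" using pq(1,2) sps by auto
      then have "q \<in> P" unfolding P'_def by blast
      moreover have "\<forall>q'\<in>P. fst p \<le> fst q' \<and> snd q' \<le> snd p \<longrightarrow> q' = p" using pP'(1) unfolding P'_def by blast
      ultimately have "q = p" using ac \<open>d \<le> b\<close> unfolding p q by auto
      then show False using pq(3) by simp
    qed
    then show "fst p \<le> fst q \<and> snd p \<le> snd q" using ac p q by simp
  qed
  moreover have "\<forall>p\<in>set ps. fst p \<le> snd p" using le unfolding sps P'_def by auto
  ultimately have "pchain ps" unfolding pchain_def by simp
  moreover have "set ps \<subseteq> P" unfolding sps P'_def by auto
  moreover have "\<exists>q\<in>set ps. fst p \<le> fst q \<and> snd q \<le> snd p" if pP: "p \<in> P" for p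
  proof -
    define D where "D = {q\<in>P. fst p \<le> fst q \<and> snd q \<le> snd p}"
    have fD: "finite D" unfolding D_def using fP by auto
    have pD: "p \<in> D" unfolding D_def using pP by auto
    define m1 where "m1 = Max (fst ` D)"
    have m1D: "m1 \<in> fst ` D" unfolding m1_def using fD pD by (intro Max_in) auto
    define D1 where "D1 = {q\<in>D. fst q = m1}"
    have fD1: "finite D1" unfolding D1_def using fD by auto
    have D1ne: "D1 \<noteq> {}" unfolding D1_def using m1D by auto
    define m2 where "m2 = Min (snd ` D1)"
    have "m2 \<in> snd ` D1" unfolding m2_def using fD1 D1ne by (intro Min_in) auto
    then obtain q0 where q0: "q0 \<in> D1" "snd q0 = m2" by auto
    have max1: "fst q \<le> m1" if "q \<in> D" for q unfolding m1_def using fD that by (intro Max_ge) auto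
    have min2: "m2 \<le> snd q" if "q \<in> D1" for q unfolding m2_def using fD1 that by (intro Min_le) auto
    have "q0 \<in> P'"
      unfolding P'_def
    proof (intro CollectI conjI ballI impI)
      show "q0 \<in> P" using q0 unfolding D1_def D_def by auto
      fix r assume rP: "r \<in> P" and r: "fst q0 \<le> fst r \<and> snd r \<le> snd q0"
      have rD: "r \<in> D" using rP r q0 unfolding D1_def D_def by auto
      have "fst r = m1" using max1[OF rD] r q0 unfolding D1_def by auto
      then have "r \<in> D1" using rD unfolding D1_def by auto
      then have "m2 \<le> snd r" by (rule min2)
      then have "snd r = snd q0" using r q0(2) by simp
      moreover have "fst r = fst q0" using \<open>fst r = m1\<close> q0 unfolding D1_def by auto
      ultimately show "r = q0" by (simp add: prod_eq_iff)
    qed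
    moreover have "fst p \<le> fst q0 \<and> snd q0 \<le> snd p" using q0 unfolding D1_def D_def by auto
    ultimately show ?thesis unfolding sps by blast
  qed
  ultimately show ?thesis by blast
qed



lemma endpoints:
  fixes I :: "'t::linorder set" and B :: "'y \<Rightarrow> 't set"
  assumes I: "is_interval I" and iv: "\<And>\<beta>. \<beta> \<in> R \<Longrightarrow> is_interval (B \<beta>)"
    and fin: "\<And>t. finite {\<beta>\<in>R. t \<in> B \<beta>}"
  shows "\<exists>a b. a \<le> b \<and> a \<in> I \<and> b \<in> I \<and> (\<forall>\<beta>\<in>R. a \<in> B \<beta> \<and> b \<in> B \<beta> \<longrightarrow> I \<subseteq> B \<beta>)"
proof -
  obtain t where tI: "t \<in> I" using I unfolding is_interval_def by auto
  define C where "C = {\<beta>\<in>R. t \<in> B \<beta> \<and> \<not> I \<subseteq> B \<beta>}"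
  have fC: "finite C" unfolding C_def using fin[of t] by (rule rev_finite_subset) auto
  have "\<forall>\<beta>\<in>C. \<exists>w. w \<in> I \<and> w \<notin> B \<beta>" unfolding C_def by blast
  then obtain wf where wf: "\<And>\<beta>. \<beta> \<in> C \<Longrightarrow> wf \<beta> \<in> I \<and> wf \<beta> \<notin> B \<beta>" by metis
  define W where "W = insert t (wf ` C)"
  have fW: "finite W" unfolding W_def using fC by simp
  have WI: "W \<subseteq> I" unfolding W_def using tI wf by auto
  define a where "a = Min W"
  define b where "b = Max W"
  have aW: "a \<in> W" unfolding a_def using fW W_def by (intro Min_in) auto
  have bW: "b \<in> W" unfolding b_def using fW W_def by (intro Max_in) auto
  have aw: "a \<le> w" if "w \<in> W" for w unfolding a_def using fW that by (rule Min_le)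
  have wb: "w \<le> b" if "w \<in> W" for w unfolding b_def using fW that by (rule Max_ge)
  have tW: "t \<in> W" unfolding W_def by simp
  have "\<forall>\<beta>\<in>R. a \<in> B \<beta> \<and> b \<in> B \<beta> \<longrightarrow> I \<subseteq> B \<beta>"
  proof (intro ballI impI)
    fix \<beta> assume \<beta>R: "\<beta> \<in> R" and ab: "a \<in> B \<beta> \<and> b \<in> B \<beta>"
    have conv: "y \<in> B \<beta>" if "y \<in> W" for y
      using iv[OF \<beta>R] ab aw[OF that] wb[OF that] unfolding is_interval_def by blast
    show "I \<subseteq> B \<beta>"
    proof (rule ccontr)
      assume nI: "\<not> I \<subseteq> B \<beta>"
      have "t \<in> B \<beta>" using conv[OF tW] .
      then have "\<beta> \<in> C" unfolding C_def using \<beta>R nI by blast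
      then have "wf \<beta> \<in> W" unfolding W_def by simp
      then have "wf \<beta> \<in> B \<beta>" by (rule conv)
      then show False using wf[OF \<open>\<beta> \<in> C\<close>] by blast
    qed
  qed
  moreover have "a \<le> b" using aw[OF tW] wb[OF tW] by simp
  ultimately show ?thesis using aW bW WI by blast
qed



theorem theorem3p3:
  fixes scT :: "'k::field \<Rightarrow> 'a::ab_group_add \<Rightarrow> 'a" and ST :: "'t::linorder \<Rightarrow> 'a set" and MT :: "'t \<Rightarrow> 't \<Rightarrow> 'a \<Rightarrow> 'a"
    and scU :: "'k \<Rightarrow> 'b::ab_group_add \<Rightarrow> 'b" and SU :: "'t \<Rightarrow> 'b set" and MU :: "'t \<Rightarrow> 't \<Rightarrow> 'b \<Rightarrow> 'b"
    and scV :: "'k \<Rightarrow> 'c::ab_group_add \<Rightarrow> 'c" and SV :: "'t \<Rightarrow> 'c set" and MV :: "'t \<Rightarrow> 't \<Rightarrow> 'c \<Rightarrow> 'c"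
    and scW :: "'k \<Rightarrow> 'd::ab_group_add \<Rightarrow> 'd" and SW :: "'t \<Rightarrow> 'd set" and MW :: "'t \<Rightarrow> 't \<Rightarrow> 'd \<Rightarrow> 'd"
    and F :: "'t \<Rightarrow> 'b \<Rightarrow> 'c" and G :: "'t \<Rightarrow> 'a \<Rightarrow> 'd"
    and \<phi>1 :: "'t \<Rightarrow> 'a \<Rightarrow> 'b" and \<phi>2 :: "'t \<Rightarrow> 'c \<Rightarrow> 'd"
    and RG :: "'x set" and BG :: "'x \<Rightarrow> 't set"
    and RF :: "'y set" and BF :: "'y \<Rightarrow> 't set"
  assumes "pmod scT ST MT" "pfd scT ST"
    and "pmod scU SU MU" "pfd scU SU"
    and "pmod scV SV MV" "pfd scV SV"
    and "pmod scW SW MW" "pfd scW SW"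
    and "phom scU SU MU scV SV MV F"
    and "phom scT ST MT scW SW MW G"
    and "phom scT ST MT scU SU MU \<phi>1"
    and "phom scV SV MV scW SW MW \<phi>2"
    and "\<forall>t. \<forall>x\<in>ST t. G t x = \<phi>2 t (F t (\<phi>1 t x))"
    and "barcode_of scW (im_space ST G) MW RG BG"
    and "barcode_of scV (im_space SU F) MV RF BF"
  shows "sub_barcode RG BG RF BF"
proof -
  note pT = assms(1)[unfolded pmod_def] and pU = assms(3)[unfolded pmod_def]
    and pV = assms(5)[unfolded pmod_def] and pW = assms(7)[unfolded pmod_def]
  have vsT: "vector_space scT" by (rule pT[THEN conjunct1])
  have vsU: "vector_space scU" by (rule pU[THEN conjunct1])
  have vsV: "vector_space scV" by (rule pV[THEN conjunct1])
  have vsW: "vector_space scW" by (rule pW[THEN conjunct1])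
  interpret T: vector_space scT by (rule vsT)
  interpret U: vector_space scU by (rule vsU)
  interpret V: vector_space scV by (rule vsV)
  interpret W: vector_space scW by (rule vsW)
  interpret pTW: vector_space_pair scT scW unfolding vector_space_pair_def using vsT vsW by (rule conjI)
  interpret pUV: vector_space_pair scU scV unfolding vector_space_pair_def using vsU vsV by (rule conjI)
  interpret pVW: vector_space_pair scV scW unfolding vector_space_pair_def using vsV vsW by (rule conjI)
  interpret pWW: vector_space_pair scW scW unfolding vector_space_pair_def using vsW vsW by (rule conjI)
  interpret pVV: vector_space_pair scV scV unfolding vector_space_pair_def using vsV vsV by (rule conjI)
  note pT2 = pT[THEN conjunct2, THEN conjunct1] and pU2 = pU[THEN conjunct2, THEN conjunct1]
    and pV2 = pV[THEN conjunct2, THEN conjunct1] and pW2 = pW[THEN conjunct2, THEN conjunct1]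
  note pT3 = pT[THEN conjunct2, THEN conjunct2, THEN conjunct1]
    and pU3 = pU[THEN conjunct2, THEN conjunct2, THEN conjunct1]
    and pV3 = pV[THEN conjunct2, THEN conjunct2, THEN conjunct1]
    and pW3 = pW[THEN conjunct2, THEN conjunct2, THEN conjunct1]
  note pV5 = pV[THEN conjunct2, THEN conjunct2, THEN conjunct2, THEN conjunct2]
    and pW5 = pW[THEN conjunct2, THEN conjunct2, THEN conjunct2, THEN conjunct2]
  have subT: "\<And>t. T.subspace (ST t)" using pT2 by blast
  have subU: "\<And>t. U.subspace (SU t)" using pU2 by blast
  have subV: "\<And>t. V.subspace (SV t)" using pV2 by blast
  have subW: "\<And>t. W.subspace (SW t)" using pW2 by blast
  have linMV: "\<And>s t. s \<le> t \<Longrightarrow> lin_on scV scV (SV s) (MV s t) \<and> MV s t ` SV s \<subseteq> SV t" using pV3 by blast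
  have linMW: "\<And>s t. s \<le> t \<Longrightarrow> lin_on scW scW (SW s) (MW s t) \<and> MW s t ` SW s \<subseteq> SW t" using pW3 by blast
  have compV: "\<And>r s t x. r \<le> s \<Longrightarrow> s \<le> t \<Longrightarrow> x \<in> SV r \<Longrightarrow> MV r t x = MV s t (MV r s x)" using pV5 by blast
  have compW: "\<And>r s t x. r \<le> s \<Longrightarrow> s \<le> t \<Longrightarrow> x \<in> SW r \<Longrightarrow> MW r t x = MW s t (MW r s x)" using pW5 by blast
  note hF = assms(9)[unfolded phom_def] and hG = assms(10)[unfolded phom_def]
    and h1 = assms(11)[unfolded phom_def] and h2 = assms(12)[unfolded phom_def]
  have linF: "\<And>t. lin_on scU scV (SU t) (F t) \<and> F t ` SU t \<subseteq> SV t" using hF[THEN conjunct1] by blast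
  have linG: "\<And>t. lin_on scT scW (ST t) (G t) \<and> G t ` ST t \<subseteq> SW t" using hG[THEN conjunct1] by blast
  have lin1: "\<And>t. lin_on scT scU (ST t) (\<phi>1 t) \<and> \<phi>1 t ` ST t \<subseteq> SU t" using h1[THEN conjunct1] by blast
  have lin2: "\<And>t. lin_on scV scW (SV t) (\<phi>2 t) \<and> \<phi>2 t ` SV t \<subseteq> SW t" using h2[THEN conjunct1] by blast
  have natF: "\<And>s t x. s \<le> t \<Longrightarrow> x \<in> SU s \<Longrightarrow> F t (MU s t x) = MV s t (F s x)" using hF[THEN conjunct2] by blast
  have natG: "\<And>s t x. s \<le> t \<Longrightarrow> x \<in> ST s \<Longrightarrow> G t (MT s t x) = MW s t (G s x)" using hG[THEN conjunct2] by blast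
  have nat2: "\<And>s t x. s \<le> t \<Longrightarrow> x \<in> SV s \<Longrightarrow> \<phi>2 t (MV s t x) = MW s t (\<phi>2 s x)" using h2[THEN conjunct2] by blast
  have MTS: "\<And>s t. s \<le> t \<Longrightarrow> MT s t ` ST s \<subseteq> ST t" using pT3 by blast
  have MUS: "\<And>s t. s \<le> t \<Longrightarrow> MU s t ` SU s \<subseteq> SU t" using pU3 by blast
  define X where "X t = G t ` ST t" for t
  define Y where "Y t = F t ` SU t" for t
  define Z where "Z t = \<phi>2 t ` Y t" for t
  have XW: "X t \<subseteq> SW t" for t unfolding X_def using linG by blast
  have YV: "Y t \<subseteq> SV t" for t unfolding Y_def using linF by blast
  have ZW: "Z t \<subseteq> SW t" for t unfolding Z_def using lin2 YV by blast
  have XZ: "X t \<subseteq> Z t" for t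
  proof
    fix w assume "w \<in> X t"
    then obtain x where x: "x \<in> ST t" "w = G t x" unfolding X_def by blast
    have "\<phi>1 t x \<in> SU t" using lin1 x(1) by blast
    then have "F t (\<phi>1 t x) \<in> Y t" unfolding Y_def by blast
    moreover have "w = \<phi>2 t (F t (\<phi>1 t x))" using assms(13) x by simp
    ultimately show "w \<in> Z t" unfolding Z_def by blast
  qed
  have subX: "W.subspace (X t)" for t
    unfolding X_def using pTW.lin_on_image_subspace[OF subT] linG by blast
  have subY: "V.subspace (Y t)" for t
    unfolding Y_def using pUV.lin_on_image_subspace[OF subU] linF by blast
  have subZ: "W.subspace (Z t)" for t
    unfolding Z_def using pVW.lin_on_image_subspace[OF subY lin_on_mono[OF _ YV]] lin2 by blast
  have fdX: "\<exists>Fs. finite Fs \<and> X t \<subseteq> W.span Fs" for t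
  proof -
    obtain Bt where Bt: "finite Bt" "Bt \<subseteq> ST t" "T.span Bt = ST t" using assms(2) unfolding pfd_def by blast
    have "X t = W.span (G t ` Bt)" unfolding X_def
      using pTW.lin_on_span_image[OF subT _ Bt(2)] linG Bt(3) by metis
    then show ?thesis using Bt(1) by blast
  qed
  have fdY: "\<exists>Fs. finite Fs \<and> Y t = V.span Fs \<and> Fs \<subseteq> Y t" for t
  proof -
    obtain Bt where Bt: "finite Bt" "Bt \<subseteq> SU t" "U.span Bt = SU t" using assms(4) unfolding pfd_def by blast
    have "Y t = V.span (F t ` Bt)" unfolding Y_def
      using pUV.lin_on_span_image[OF subU _ Bt(2)] linF Bt(3) by metis
    moreover have "F t ` Bt \<subseteq> Y t" unfolding Y_def using Bt(2) by blast
    ultimately show ?thesis using Bt(1) by blast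
  qed
  have fdY': "\<exists>Fs. finite Fs \<and> Y t \<subseteq> V.span Fs" for t using fdY[of t] by blast
  have fdZ: "\<exists>Fs. finite Fs \<and> Z t \<subseteq> W.span Fs" for t
  proof -
    obtain Fs where Fs: "finite Fs" "Y t = V.span Fs" "Fs \<subseteq> Y t" using fdY by blast
    have "Z t = W.span (\<phi>2 t ` Fs)" unfolding Z_def
      using pVW.lin_on_span_image[OF subY lin_on_mono[OF _ YV] Fs(3)] lin2 Fs(2) by metis
    then show ?thesis using Fs(1) by blast
  qed
  have mapX: "a \<le> b \<Longrightarrow> MW a b ` X a \<subseteq> X b" for a b
  proof
    fix w assume ab: "a \<le> b" and "w \<in> MW a b ` X a"
    then obtain x where x: "x \<in> ST a" "w = MW a b (G a x)" unfolding X_def by blast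
    then have "w = G b (MT a b x)" using natG[OF ab x(1)] by simp
    then show "w \<in> X b" unfolding X_def using MTS[OF ab] x(1) by blast
  qed
  have mapY: "a \<le> b \<Longrightarrow> MV a b ` Y a \<subseteq> Y b" for a b
  proof
    fix w assume ab: "a \<le> b" and "w \<in> MV a b ` Y a"
    then obtain x where x: "x \<in> SU a" "w = MV a b (F a x)" unfolding Y_def by blast
    then have "w = F b (MU a b x)" using natF[OF ab x(1)] by simp
    then show "w \<in> Y b" unfolding Y_def using MUS[OF ab] x(1) by blast
  qed
  have mapZ: "a \<le> b \<Longrightarrow> MW a b ` Z a \<subseteq> Z b" for a b
  proof
    fix w assume ab: "a \<le> b" and "w \<in> MW a b ` Z a"
    then obtain y where y: "y \<in> Y a" "w = MW a b (\<phi>2 a y)" unfolding Z_def by blast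
    have "y \<in> SV a" using YV y(1) by blast
    then have "w = \<phi>2 b (MV a b y)" using nat2[OF ab] y(2) by simp
    then show "w \<in> Z b" unfolding Z_def using mapY[OF ab] y(1) by blast
  qed

  have linMWX: "a \<le> b \<Longrightarrow> lin_on scW scW (Z a) (MW a b)" for a b
    using lin_on_mono[OF _ ZW] linMW by blast
  have linMWX': "a \<le> b \<Longrightarrow> lin_on scW scW (X a) (MW a b)" for a b
    using lin_on_mono[OF _ XW] linMW by blast
  have linMVY: "a \<le> b \<Longrightarrow> lin_on scV scV (Y a) (MV a b)" for a b
    using lin_on_mono[OF _ YV] linMV by blast
  have imX: "im_space ST G = X" unfolding im_space_def X_def by (rule ext) simp
  have imY: "im_space SU F = Y" unfolding im_space_def Y_def by (rule ext) simp
  have bcX: "barcode_of scW X MW RG BG" using assms(14) imX by simp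
  have bcY: "barcode_of scV Y MV RF BF" using assms(15) imY by simp
  have finX: "\<And>t. finite {\<alpha>\<in>RG. t \<in> BG \<alpha>}"
    and rkX: "\<And>a b. a \<le> b \<Longrightarrow> W.dim (MW a b ` X a) = card {\<alpha>\<in>RG. a \<in> BG \<alpha> \<and> b \<in> BG \<alpha>}"
    using barcode_rank[OF vsW subX fdX _ bcX] mapX linMWX' by blast+
  have finY: "\<And>t. finite {\<beta>\<in>RF. t \<in> BF \<beta>}"
    and rkY: "\<And>a b. a \<le> b \<Longrightarrow> V.dim (MV a b ` Y a) = card {\<beta>\<in>RF. a \<in> BF \<beta> \<and> b \<in> BF \<beta>}"
    using barcode_rank[OF vsV subY fdY' _ bcY] mapY linMVY by blast+
  have ivG: "\<And>\<alpha>. \<alpha> \<in> RG \<Longrightarrow> is_interval (BG \<alpha>)" using bcX unfolding barcode_of_def is_barcode_def by blast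
  have ivF: "\<And>\<beta>. \<beta> \<in> RF \<Longrightarrow> is_interval (BF \<beta>)" using bcY unfolding barcode_of_def is_barcode_def by blast
  define rX where "rX a b = int (W.dim (MW a b ` X a))" for a b
  define rZ where "rZ a b = int (W.dim (MW a b ` Z a))" for a b
  define rY where "rY a b = int (V.dim (MV a b ` Y a))" for a b
  have subimg: "W.subspace (MW a b ` Z a)" "W.subspace (MW a b ` X a)" if "a \<le> b" for a b
    using pWW.lin_on_image_subspace[OF subZ linMWX[OF that]]
      pWW.lin_on_image_subspace[OF subX linMWX'[OF that]] by auto
  have subimgY: "V.subspace (MV a b ` Y a)" if "a \<le> b" for a b
    using pVV.lin_on_image_subspace[OF subY linMVY[OF that]] by auto
  have XZi: "MW a b ` X a \<subseteq> MW a b ` Z a" for a b using XZ by blast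
  have sub_ineq: "rX a b - rX a b' \<le> rZ a b - rZ a b'" if ab: "a \<le> b" "b \<le> b'" for a b b'
  proof -
    obtain Fs where Fs: "finite Fs" "Z b \<subseteq> W.span Fs" using fdZ by blast
    have AZ: "MW a b ` Z a \<subseteq> Z b" using mapZ[OF ab(1)] .
    have AW: "MW a b ` Z a \<subseteq> SW b" using AZ ZW by blast
    have hlin: "lin_on scW scW (MW a b ` Z a) (MW b b')" using lin_on_mono[OF _ AW] linMW[OF ab(2)] by blast
    have key: "W.dim (MW a b ` X a) + W.dim (MW b b' ` MW a b ` Z a)
        \<le> W.dim (MW a b ` Z a) + W.dim (MW b b' ` MW a b ` X a)"
      using pWW.rank_key[OF subimg(1)[OF ab(1)] Fs(1) _ subimg(2)[OF ab(1)] XZi hlin] AZ Fs(2) by blast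
    have e1: "MW b b' ` MW a b ` Z a = MW a b' ` Z a"
      unfolding image_image by (intro image_cong refl) (metis compW[OF ab] ZW subsetD)
    have e2: "MW b b' ` MW a b ` X a = MW a b' ` X a"
      unfolding image_image by (intro image_cong refl) (metis compW[OF ab] XW subsetD)
    show ?thesis using key unfolding e1 e2 rX_def rZ_def by simp
  qed
  have XZle: "rX a b \<le> rZ a b" if ab: "a \<le> b" for a b
  proof -
    obtain Fs where Fs: "finite Fs" "Z b \<subseteq> W.span Fs" using fdZ by blast
    show ?thesis unfolding rX_def rZ_def
      using W.dim_mono_fd[OF XZi _ Fs(1)] mapZ[OF ab] Fs(2) by force
  qed
  have quot_ineq: "rZ a b - rZ a' b \<le> rY a b - rY a' b" if ab: "a' \<le> a" "a \<le> b" for a' a b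
  proof -
    have a'b: "a' \<le> b" using ab by simp
    obtain Fs where Fs: "finite Fs" "Y b \<subseteq> V.span Fs" using fdY' by blast
    have AY: "MV a b ` Y a \<subseteq> Y b" using mapY[OF ab(2)] .
    have AV: "MV a b ` Y a \<subseteq> SV b" using AY YV by blast
    have BA: "MV a' b ` Y a' \<subseteq> MV a b ` Y a"
    proof
      fix w assume "w \<in> MV a' b ` Y a'"
      then obtain y where y: "y \<in> Y a'" "w = MV a' b y" by blast
      have "w = MV a b (MV a' a y)" using compV[OF ab] y YV by blast
      moreover have "MV a' a y \<in> Y a" using mapY[OF ab(1)] y(1) by blast
      ultimately show "w \<in> MV a b ` Y a" by blast
    qed
    have hlin: "lin_on scV scW (MV a b ` Y a) (\<phi>2 b)" using lin_on_mono[OF _ AV] lin2 by blast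
    have key: "V.dim (MV a' b ` Y a') + W.dim (\<phi>2 b ` MV a b ` Y a)
        \<le> V.dim (MV a b ` Y a) + W.dim (\<phi>2 b ` MV a' b ` Y a')"
      using pVW.rank_key[OF subimgY[OF ab(2)] Fs(1) _ subimgY[OF a'b] BA hlin] AY Fs(2) by blast
    have e1: "\<phi>2 b ` MV a b ` Y a = MW a b ` Z a"
      unfolding Z_def image_image by (intro image_cong refl) (metis nat2[OF ab(2)] YV subsetD)
    have e2: "\<phi>2 b ` MV a' b ` Y a' = MW a' b ` Z a'"
      unfolding Z_def image_image by (intro image_cong refl) (metis nat2[OF a'b] YV subsetD)
    show ?thesis using key unfolding e1 e2 rY_def rZ_def by simp
  qed
  have ZYle: "rZ a b \<le> rY a b" if ab: "a \<le> b" for a b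
  proof -
    obtain Fs where Fs: "finite Fs" "Y b \<subseteq> V.span Fs" using fdY' by blast
    have AY: "MV a b ` Y a \<subseteq> Y b" using mapY[OF ab] .
    have AV: "MV a b ` Y a \<subseteq> SV b" using AY YV by blast
    have hlin: "lin_on scV scW (MV a b ` Y a) (\<phi>2 b)" using lin_on_mono[OF _ AV] lin2 by blast
    have z0: "V.subspace {0}" by simp
    have z0A: "{0} \<subseteq> MV a b ` Y a" using subimgY[OF ab] V.subspace_0 by blast
    have key: "V.dim {0} + W.dim (\<phi>2 b ` MV a b ` Y a)
        \<le> V.dim (MV a b ` Y a) + W.dim (\<phi>2 b ` {0})"
      using pVW.rank_key[OF subimgY[OF ab] Fs(1) _ z0 z0A hlin] AY Fs(2) by blast
    have "\<phi>2 b 0 = 0" using pVW.lin_on_zero[OF subV] lin2 by blast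
    then have "\<phi>2 b ` {0} = {0}" by simp
    moreover have e1: "\<phi>2 b ` MV a b ` Y a = MW a b ` Z a"
      unfolding Z_def image_image by (intro image_cong refl) (metis nat2[OF ab] YV subsetD)
    ultimately show ?thesis using key V.dim_zero_space W.dim_zero_space
      unfolding rY_def rZ_def by simp
  qed
  obtain ea eb where eab: "\<And>\<alpha>. \<alpha> \<in> RG \<Longrightarrow> ea \<alpha> \<le> eb \<alpha> \<and> ea \<alpha> \<in> BG \<alpha> \<and> eb \<alpha> \<in> BG \<alpha> \<and>
      (\<forall>\<beta>\<in>RF. ea \<alpha> \<in> BF \<beta> \<and> eb \<alpha> \<in> BF \<beta> \<longrightarrow> BG \<alpha> \<subseteq> BF \<beta>)"
  proof -
    have "\<forall>\<alpha>\<in>RG. \<exists>a b. a \<le> b \<and> a \<in> BG \<alpha> \<and> b \<in> BG \<alpha> \<and> (\<forall>\<beta>\<in>RF. a \<in> BF \<beta> \<and> b \<in> BF \<beta> \<longrightarrow> BG \<alpha> \<subseteq> BF \<beta>)"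
      using endpoints[OF ivG ivF finY] by blast
    then show ?thesis using that by metis
  qed
  define N where "N = {(\<alpha>, \<beta>). \<alpha> \<in> RG \<and> \<beta> \<in> RF \<and> BG \<alpha> \<subseteq> BF \<beta>}"
  have Nrow: "N `` {\<alpha>} \<subseteq> {\<beta>\<in>RF. ea \<alpha> \<in> BF \<beta>}" if "\<alpha> \<in> RG" for \<alpha>
    using eab[OF that] unfolding N_def by blast
  have hall: "hall_cond RG N"
    unfolding hall_cond_def
  proof (intro allI impI)
    fix S assume SRG: "S \<subseteq> RG" and fS: "finite S"
    define P where "P = (\<lambda>\<alpha>. (ea \<alpha>, eb \<alpha>)) ` S"
    have fP: "finite P" unfolding P_def using fS by simp
    have Ple: "\<And>p. p \<in> P \<Longrightarrow> fst p \<le> snd p" unfolding P_def using eab SRG by auto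
    obtain ps where ps: "pchain ps" "set ps \<subseteq> P" "\<forall>p\<in>P. \<exists>q\<in>set ps. fst p \<le> fst q \<and> snd q \<le> snd p"
      using chain_exists[OF fP Ple] by blast
    define SX where "SX = {\<alpha>\<in>RG. \<exists>q\<in>set ps. fst q \<in> BG \<alpha> \<and> snd q \<in> BG \<alpha>}"
    define SY where "SY = {\<beta>\<in>RF. \<exists>q\<in>set ps. fst q \<in> BF \<beta> \<and> snd q \<in> BF \<beta>}"
    have gX: "gsum rX ps = int (card SX)" unfolding SX_def
      using gsum_count[OF ivG finX _ ps(1)] rkX unfolding rX_def by simp
    have gY: "gsum rY ps = int (card SY)" unfolding SY_def
      using gsum_count[OF ivF finY _ ps(1)] rkY unfolding rY_def by simp
    have g1: "gsum rX ps \<le> gsum rZ ps" using gsum_sub_mono[where ra=rX and rb=rZ, OF sub_ineq XZle ps(1)] by blast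
    have g2: "gsum rZ ps \<le> gsum rY ps" using gsum_quot_mono[where ra=rZ and rb=rY, OF quot_ineq ZYle ps(1)] by blast
    have SSX: "S \<subseteq> SX"
    proof
      fix \<alpha> assume \<alpha>S: "\<alpha> \<in> S"
      then have \<alpha>R: "\<alpha> \<in> RG" using SRG by blast
      have "(ea \<alpha>, eb \<alpha>) \<in> P" unfolding P_def using \<alpha>S by blast
      then obtain q where q: "q \<in> set ps" "ea \<alpha> \<le> fst q" "snd q \<le> eb \<alpha>" using ps(3) by fastforce
      have qle: "fst q \<le> snd q" using ps(1) q(1) unfolding pchain_def by blast
      have "fst q \<in> BG \<alpha>" "snd q \<in> BG \<alpha>"
        using ivG[OF \<alpha>R] eab[OF \<alpha>R] q qle unfolding is_interval_def by (meson order_trans)+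
      then show "\<alpha> \<in> SX" unfolding SX_def using \<alpha>R q(1) by blast
    qed
    have fSX: "finite SX"
    proof -
      have "SX \<subseteq> (\<Union>q\<in>set ps. {\<alpha>\<in>RG. fst q \<in> BG \<alpha>})" unfolding SX_def by blast
      moreover have "finite (\<Union>q\<in>set ps. {\<alpha>\<in>RG. fst q \<in> BG \<alpha>})" using finX by blast
      ultimately show ?thesis by (rule finite_subset)
    qed
    have SYN: "SY \<subseteq> N `` S"
    proof
      fix \<beta> assume "\<beta> \<in> SY"
      then obtain q where q: "\<beta> \<in> RF" "q \<in> set ps" "fst q \<in> BF \<beta>" "snd q \<in> BF \<beta>" unfolding SY_def by blast
      then obtain \<alpha> where \<alpha>: "\<alpha> \<in> S" "q = (ea \<alpha>, eb \<alpha>)" using ps(2) unfolding P_def by blast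
      have \<alpha>R: "\<alpha> \<in> RG" using \<alpha>(1) SRG by blast
      have "BG \<alpha> \<subseteq> BF \<beta>" using eab[OF \<alpha>R] q \<alpha>(2) by auto
      then show "\<beta> \<in> N `` S" unfolding N_def using \<alpha>(1) \<alpha>R q(1) by blast
    qed
    have fNS: "finite (N `` S)"
    proof -
      have "N `` S \<subseteq> (\<Union>\<alpha>\<in>S. {\<beta>\<in>RF. ea \<alpha> \<in> BF \<beta>})" using Nrow SRG by blast
      moreover have "finite (\<Union>\<alpha>\<in>S. {\<beta>\<in>RF. ea \<alpha> \<in> BF \<beta>})" using finY fS by blast
      ultimately show ?thesis by (rule finite_subset)
    qed
    have "card S \<le> card SX" using card_mono[OF fSX SSX] .
    moreover have "card SY \<le> card (N `` S)" using card_mono[OF fNS SYN] .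
    ultimately show "card S \<le> card (N `` S)" using gX gY g1 g2 by linarith
  qed
  have NA: "N \<subseteq> RG \<times> UNIV" unfolding N_def by blast
  have finrow: "\<And>\<alpha>. \<alpha> \<in> RG \<Longrightarrow> finite (N `` {\<alpha>})"
    using Nrow finY by (meson rev_finite_subset)
  obtain M where M: "M \<subseteq> N" "\<forall>a\<in>RG. \<exists>!b. (a, b) \<in> M"
    "\<forall>a a' b. (a, b) \<in> M \<longrightarrow> (a', b) \<in> M \<longrightarrow> a = a'"
    using hall_infinite[OF NA finrow hall] by blast
  show ?thesis
    unfolding sub_barcode_def
  proof (intro exI[of _ M] conjI)
    show "is_matching M RG RF"
      unfolding is_matching_def
    proof (intro conjI allI impI)
      show "M \<subseteq> RG \<times> RF" using M(1) unfolding N_def by blast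
    next
      fix a b b' assume "(a, b) \<in> M" "(a, b') \<in> M"
      moreover then have "a \<in> RG" using M(1) unfolding N_def by blast
      ultimately show "b = b'" using M(2) by blast
    next
      fix a a' b assume "(a, b) \<in> M" "(a', b) \<in> M"
      then show "a = a'" using M(3) by blast
    qed
    show "\<forall>\<alpha>\<in>RG. \<exists>\<beta>. (\<alpha>, \<beta>) \<in> M" using M(2) by blast
    show "\<forall>(\<alpha>, \<beta>)\<in>M. BG \<alpha> \<subseteq> BF \<beta>" using M(1) unfolding N_def by blast
  qed
qed


end
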